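(* Let $\overline X$ be a triangle-free, square-free simplicial graph no connected component of which is a single vertex, and let $X$ be the blowup of $\overline X$ with respect to non-empty graphs $\{L_v\}$. Let $\Sigma,\Delta$ be non-maximal simplices of $X$. Then there exist (possibly empty or maximal) simplices $\Pi,\Psi$ of $X$ with $\Sigma\subseteq\Pi$ such that $\mathrm{Lk}(\Sigma)\cap\mathrm{Lk}(\Delta)=\mathrm{Lk}(\Pi)\star\Psi$.
   Context: Graphs are simplicial; a simplex is a (possibly empty) clique. For a simplex $\Delta$, $\mathrm{Lk}(\Delta)$ is the subgraph spanned by vertices not in $\Delta$ adjacent to every vertex of $\Delta$ ($\mathrm{Lk}(\emptyset)=X$). $\star$ denotes join. Blowup: $X$ is obtained from $\overline X$ by replacing each vertex $v$ by $\mathrm{Squid}(v)$, the star with centre $v$ and leaf set $L_v^{(0)}$ (no edges among leaves). For $\overline X$-adjacent $v,w$, every vertex of $\mathrm{Squid}(v)$ is adjacent to every vertex of $\mathrm{Squid}(w)$; there are no other edges. *)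

theory Defs
  imports Main
begin

type_synonym 'a graph = "'a set \<times> ('a \<Rightarrow> 'a \<Rightarrow> bool)"

definition simplicial_graph :: "'a set \<Rightarrow> ('a \<Rightarrow> 'a \<Rightarrow> bool) \<Rightarrow> bool" where
  "simplicial_graph V E \<longleftrightarrow>
     (\<forall>x y. E x y \<longrightarrow> x \<in> V \<and> y \<in> V) \<and>
     (\<forall>x y. E x y \<longrightarrow> E y x) \<and> (\<forall>x. \<not> E x x)"

definition triangle_free :: "'a set \<Rightarrow> ('a \<Rightarrow> 'a \<Rightarrow> bool) \<Rightarrow> bool" where
  "triangle_free V E \<longleftrightarrow>
     \<not> (\<exists>a\<in>V. \<exists>b\<in>V. \<exists>c\<in>V. E a b \<and> E b c \<and> E c a)"

definition square_free :: "'a set \<Rightarrow> ('a \<Rightarrow> 'a \<Rightarrow> bool) \<Rightarrow> bool" where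
  "square_free V E \<longleftrightarrow>
     \<not> (\<exists>a\<in>V. \<exists>b\<in>V. \<exists>c\<in>V. \<exists>d\<in>V. a \<noteq> c \<and> b \<noteq> d \<and>
          E a b \<and> E b c \<and> E c d \<and> E d a \<and> \<not> E a c \<and> \<not> E b d)"

definition no_isolated_vertex :: "'a set \<Rightarrow> ('a \<Rightarrow> 'a \<Rightarrow> bool) \<Rightarrow> bool" where
  "no_isolated_vertex V E \<longleftrightarrow> (\<forall>v\<in>V. \<exists>w\<in>V. E v w)"

definition simplex :: "'a set \<Rightarrow> ('a \<Rightarrow> 'a \<Rightarrow> bool) \<Rightarrow> 'a set \<Rightarrow> bool" where
  "simplex V E S \<longleftrightarrow> finite S \<and> S \<subseteq> V \<and> (\<forall>x\<in>S. \<forall>y\<in>S. x \<noteq> y \<longrightarrow> E x y)"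

definition maximal_simplex :: "'a set \<Rightarrow> ('a \<Rightarrow> 'a \<Rightarrow> bool) \<Rightarrow> 'a set \<Rightarrow> bool" where
  "maximal_simplex V E S \<longleftrightarrow> simplex V E S \<and> (\<forall>T. simplex V E T \<and> S \<subseteq> T \<longrightarrow> T = S)"

definition induced :: "('a \<Rightarrow> 'a \<Rightarrow> bool) \<Rightarrow> 'a set \<Rightarrow> 'a graph" where
  "induced E W = (W, \<lambda>x y. x \<in> W \<and> y \<in> W \<and> E x y)"

definition link :: "'a set \<Rightarrow> ('a \<Rightarrow> 'a \<Rightarrow> bool) \<Rightarrow> 'a set \<Rightarrow> 'a graph" where
  "link V E S = induced E {x \<in> V. x \<notin> S \<and> (\<forall>s\<in>S. E x s)}"

definition graph_inter :: "'a graph \<Rightarrow> 'a graph \<Rightarrow> 'a graph" where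
  "graph_inter G H = (fst G \<inter> fst H, \<lambda>x y. snd G x y \<and> snd H x y)"

text \<open>Join of two vertex-disjoint graphs on a common vertex type: union plus all
edges between the two vertex sets. (Disjointness is required separately.)\<close>
definition graph_join :: "'a graph \<Rightarrow> 'a graph \<Rightarrow> 'a graph" where
  "graph_join G H = (fst G \<union> fst H,
     \<lambda>x y. snd G x y \<or> snd H x y \<or> (x \<in> fst G \<and> y \<in> fst H) \<or> (x \<in> fst H \<and> y \<in> fst G))"

text \<open>Blowup of (VB, EB) w.r.t. leaf sets L v. The centre of Squid(v) is (v, None),
a leaf l \<in> L v of Squid(v) is (v, Some l).\<close>
definition blowup_V :: "'v set \<Rightarrow> ('v \<Rightarrow> 'l set) \<Rightarrow> ('v \<times> 'l option) set" where
  "blowup_V VB L = {(v, None) | v. v \<in> VB} \<union> {(v, Some l) | v l. v \<in> VB \<and> l \<in> L v}"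

definition blowup_E :: "'v set \<Rightarrow> ('v \<Rightarrow> 'v \<Rightarrow> bool) \<Rightarrow> ('v \<Rightarrow> 'l set)
     \<Rightarrow> ('v \<times> 'l option) \<Rightarrow> ('v \<times> 'l option) \<Rightarrow> bool" where
  "blowup_E VB EB L p q \<longleftrightarrow> p \<in> blowup_V VB L \<and> q \<in> blowup_V VB L \<and>
     ((fst p = fst q \<and> ((snd p = None \<and> snd q \<noteq> None) \<or> (snd p \<noteq> None \<and> snd q = None)))
      \<or> EB (fst p) (fst q))"

end

theory Submission
  imports Defs
begin


lemma inter_link:
  "graph_inter (link V E S) (link V E D) = link V E (S \<union> D)"
  unfolding graph_inter_def link_def induced_def by (auto simp: fun_eq_iff)

lemma join_eq:
  assumes sym: "\<And>x y. E x y \<Longrightarrow> E y x"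
    and eq: "fst (link V E Om) = fst (link V E P) \<union> Q"
    and cross: "\<forall>x\<in>fst (link V E P). \<forall>y\<in>Q. E x y"
  shows "link V E Om = graph_join (link V E P) (induced E Q)"
proof -
  have l: "link V E Om = induced E (fst (link V E Om))" "link V E P = induced E (fst (link V E P))"
    unfolding link_def induced_def by auto
  show ?thesis
    apply (subst l(1), subst l(2))
    unfolding graph_join_def induced_def eq
    apply (simp add: fun_eq_iff)
    using cross sym by blast
qed

locale BL =
  fixes VB :: "'v set" and EB :: "'v \<Rightarrow> 'v \<Rightarrow> bool" and L :: "'v \<Rightarrow> 'l set"
  assumes sg: "simplicial_graph VB EB"
    and tf: "triangle_free VB EB"
    and sf: "square_free VB EB"
    and ni: "no_isolated_vertex VB EB"
    and ne: "\<forall>v\<in>VB. L v \<noteq> {}"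
begin

abbreviation "V \<equiv> blowup_V VB L"
abbreviation "E \<equiv> blowup_E VB EB L"

lemma EB_V: "EB a b \<Longrightarrow> a \<in> VB \<and> b \<in> VB" using sg unfolding simplicial_graph_def by blast
lemma EB_sym: "EB a b \<Longrightarrow> EB b a" using sg unfolding simplicial_graph_def by blast
lemma EB_irr: "\<not> EB a a" using sg unfolding simplicial_graph_def by blast
lemma tri: "EB a b \<Longrightarrow> EB b c \<Longrightarrow> EB c a \<Longrightarrow> False"
  using tf EB_V unfolding triangle_free_def by blast
lemma uniq:
  assumes "EB c a" "EB c b" "EB d a" "EB d b" "a \<noteq> b" "\<not> EB a b"
  shows "c = d"
proof (rule ccontr)
  assume "c \<noteq> d"
  have "\<not> EB c d" using tri assms EB_sym by blast
  then show False using sf assms EB_V[OF assms(1)] EB_V[OF assms(4)] EB_sym[OF assms(3)] EB_sym[OF assms(2)] \<open>c \<noteq> d\<close>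
    unfolding square_free_def by blast
qed

lemma V_None[simp]: "(a, None) \<in> V \<longleftrightarrow> a \<in> VB" unfolding blowup_V_def by auto
lemma V_Some[simp]: "(a, Some l) \<in> V \<longleftrightarrow> a \<in> VB \<and> l \<in> L a" unfolding blowup_V_def by auto
lemma V_pair: "z \<in> V \<longleftrightarrow> fst z \<in> VB \<and> (\<forall>l. snd z = Some l \<longrightarrow> l \<in> L (fst z))"
  unfolding blowup_V_def by (cases z; cases "snd z") auto

lemma E_NN[simp]: "E (a, None) (b, None) \<longleftrightarrow> EB a b"
  unfolding blowup_E_def using EB_V by auto
lemma E_NS[simp]: "E (a, None) (b, Some l) \<longleftrightarrow> b \<in> VB \<and> l \<in> L b \<and> (a = b \<or> EB a b)"
  unfolding blowup_E_def using EB_V by auto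
lemma E_SN[simp]: "E (a, Some l) (b, None) \<longleftrightarrow> a \<in> VB \<and> l \<in> L a \<and> (a = b \<or> EB a b)"
  unfolding blowup_E_def using EB_V by auto
lemma E_SS[simp]: "E (a, Some l) (b, Some m) \<longleftrightarrow> l \<in> L a \<and> m \<in> L b \<and> EB a b"
  unfolding blowup_E_def using EB_V by auto

lemma E_sym: "E x y \<Longrightarrow> E y x"
  unfolding blowup_E_def using EB_sym by auto
lemma E_V: "E x y \<Longrightarrow> x \<in> V \<and> y \<in> V" unfolding blowup_E_def by auto
lemma E_irr: "\<not> E x x" unfolding blowup_E_def using EB_irr by auto

end

context BL begin

lemma E_fst_ne: "E x y \<Longrightarrow> fst x \<noteq> fst y \<Longrightarrow> EB (fst x) (fst y)"
  unfolding blowup_E_def by auto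
lemma E_fst_eq: "E x y \<Longrightarrow> fst x = fst y \<Longrightarrow> snd x = None \<or> snd y = None"
  unfolding blowup_E_def using EB_irr by auto

lemma clique_cover:
  assumes "\<forall>x\<in>C. \<forall>y\<in>C. x \<noteq> y \<longrightarrow> E x y"
  shows "\<exists>a b xa xb. C \<subseteq> {(a,None),(b,None),xa,xb}"
proof -
  have "\<exists>a b. \<forall>x\<in>C. fst x = a \<or> fst x = b"
  proof (cases "C = {}")
    case True then show ?thesis by auto
  next
    case False
    then obtain x0 where x0: "x0 \<in> C" by auto
    show ?thesis
    proof (cases "\<forall>x\<in>C. fst x = fst x0")
      case True then show ?thesis by blast
    next
      case False
      then obtain x1 where x1: "x1 \<in> C" "fst x1 \<noteq> fst x0" by auto
      have e01: "EB (fst x0) (fst x1)" using assms x0 x1 E_fst_ne by (metis)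
      have "\<forall>x\<in>C. fst x = fst x0 \<or> fst x = fst x1"
      proof
        fix x assume x: "x \<in> C"
        show "fst x = fst x0 \<or> fst x = fst x1"
        proof (rule ccontr)
          assume h: "\<not> ?thesis"
          then have "EB (fst x0) (fst x)" "EB (fst x1) (fst x)"
            using assms x0 x1 x E_fst_ne by (metis)+
          then show False using e01 tri EB_sym by blast
        qed
      qed
      then show ?thesis by blast
    qed
  qed
  then obtain a b where ab: "\<forall>x\<in>C. fst x = a \<or> fst x = b" by blast
  define xa where "xa = (SOME x. x \<in> C \<and> fst x = a \<and> snd x \<noteq> None)"
  define xb where "xb = (SOME x. x \<in> C \<and> fst x = b \<and> snd x \<noteq> None)"
  have "C \<subseteq> {(a,None),(b,None),xa,xb}"
  proof
    fix x assume x: "x \<in> C"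
    show "x \<in> {(a,None),(b,None),xa,xb}"
    proof (cases "snd x = None")
      case True then show ?thesis using ab x by (cases x) auto
    next
      case False
      show ?thesis
      proof (cases "fst x = a")
        case True
        then have ex: "\<exists>x. x \<in> C \<and> fst x = a \<and> snd x \<noteq> None" using x False by blast
        have xa: "xa \<in> C \<and> fst xa = a \<and> snd xa \<noteq> None" unfolding xa_def using someI_ex[OF ex] .
        have "x = xa"
        proof (rule ccontr)
          assume "x \<noteq> xa"
          then have "E x xa" using assms x xa by blast
          then show False using E_fst_eq xa True False by metis
        qed
        then show ?thesis by simp
      next
        case fa: False
        then have True': "fst x = b" using ab x by blast
        then have ex: "\<exists>x. x \<in> C \<and> fst x = b \<and> snd x \<noteq> None" using x False by blast
        have xb: "xb \<in> C \<and> fst xb = b \<and> snd xb \<noteq> None" unfolding xb_def using someI_ex[OF ex] .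
        have "x = xb"
        proof (rule ccontr)
          assume "x \<noteq> xb"
          then have "E x xb" using assms x xb by blast
          then show False using E_fst_eq xb True' False by metis
        qed
        then show ?thesis by simp
      qed
    qed
  qed
  then show ?thesis by blast
qed

lemma clique_finite:
  assumes "\<forall>x\<in>C. \<forall>y\<in>C. x \<noteq> y \<longrightarrow> E x y"
  shows "finite C \<and> card C \<le> 4"
proof -
  obtain a b xa xb where C: "C \<subseteq> {(a,None),(b,None),xa,xb}" using clique_cover[OF assms] by blast
  have "card {(a,None),(b,None),xa,xb} \<le> 4"
    by (simp add: card_insert_if)
  moreover have "card C \<le> card {(a,None),(b,None),xa,xb}" by (rule card_mono[OF _ C]) simp
  ultimately show ?thesis using finite_subset[OF C] by simp
qed

lemma simplex_ext:
  assumes "simplex V E S"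
  shows "\<exists>M. maximal_simplex V E M \<and> S \<subseteq> M"
proof -
  let ?P = "\<lambda>T. simplex V E T \<and> S \<subseteq> T"
  have "\<exists>T. ?P T \<and> (\<forall>T'. ?P T' \<longrightarrow> card T' \<le> card T)"
    apply (rule ex_has_greatest_nat[where b = 5])
    using assms apply blast
    using clique_finite unfolding simplex_def by (metis le_imp_less_Suc numeral_eq_Suc pred_numeral_simps(3))
  then obtain T where T: "?P T" "\<forall>T'. ?P T' \<longrightarrow> card T' \<le> card T" by blast
  have "maximal_simplex V E T"
    unfolding maximal_simplex_def
  proof (intro conjI allI impI)
    show "simplex V E T" using T by blast
    fix T' assume h: "simplex V E T' \<and> T \<subseteq> T'"
    then have "card T' \<le> card T" using T by blast
    then show "T' = T" using h card_subset_eq[of T' T] unfolding simplex_def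
      by (metis card_seteq)
  qed
  then show ?thesis using T by blast
qed

lemma link_max_empty:
  assumes "maximal_simplex V E M"
  shows "fst (link V E M) = {}"
proof (rule ccontr)
  assume "fst (link V E M) \<noteq> {}"
  then obtain x where x: "x \<in> V" "x \<notin> M" "\<forall>s\<in>M. E x s"
    unfolding link_def induced_def by auto
  have "simplex V E (insert x M)" using assms x E_sym unfolding maximal_simplex_def simplex_def by auto
  then show False using assms x unfolding maximal_simplex_def by blast
qed

end

context BL begin

lemma lk_eq: "fst (link V E S) = {x \<in> V. x \<notin> S \<and> (\<forall>s\<in>S. E x s)}"
  unfolding link_def induced_def by simp

lemma E_by_EB: "x \<in> V \<Longrightarrow> s \<in> V \<Longrightarrow> EB (fst x) (fst s) \<Longrightarrow> E x s"
  unfolding blowup_E_def by auto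
lemma E_same: "x \<in> V \<Longrightarrow> s \<in> V \<Longrightarrow> fst x = fst s \<Longrightarrow> (snd x = None) \<noteq> (snd s = None) \<Longrightarrow> E x s"
  unfolding blowup_E_def by auto

lemma LkA1: "v \<in> VB \<Longrightarrow> l \<in> L v \<Longrightarrow> fst (link V E {(v,None),(v,Some l)}) = {x\<in>V. EB (fst x) v}"
  unfolding lk_eq
  apply (rule set_eqI)
  subgoal for x by (cases x; cases "snd x") (auto simp: EB_irr)
  done

lemma LkA2: "v \<in> VB \<Longrightarrow> l \<in> L v \<Longrightarrow> fst (link V E {(v,Some l)}) = insert (v,None) {x\<in>V. EB (fst x) v}"
  unfolding lk_eq
  apply (rule set_eqI)
  subgoal for x by (cases x; cases "snd x") (auto simp: EB_irr)
  done

lemma LkB: "EB w z \<Longrightarrow> l \<in> L z \<Longrightarrow>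
   fst (link V E {(w,None),(z,None),(z,Some l)}) = {x\<in>V. fst x = w \<and> snd x \<noteq> None}"
  unfolding lk_eq
  apply (rule set_eqI)
  subgoal for x by (cases x; cases "snd x") (auto simp: EB_irr EB_V dest: EB_sym tri)
  done

lemma LkC: "EB u v \<Longrightarrow> l \<in> L v \<Longrightarrow>
   fst (link V E {(u,None),(v,Some l)}) = insert (v,None) {x\<in>V. fst x = u \<and> snd x \<noteq> None}"
  unfolding lk_eq
  apply (rule set_eqI)
  subgoal for x by (cases x; cases "snd x") (auto simp: EB_irr EB_V dest: EB_sym tri)
  done

end

context BL begin

definition good where
  "good Om S P Q \<longleftrightarrow> simplex V E P \<and> simplex V E Q \<and> S \<subseteq> P \<and> fst (link V E P) \<inter> Q = {} \<and>
     fst (link V E Om) = fst (link V E P) \<union> Q \<and> (\<forall>x\<in>fst (link V E P). \<forall>y\<in>Q. E x y)"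

lemma extractL:
  assumes "simplex V E S" "S \<subseteq> insert (a,None) {z. fst z = z0}" "z0 \<in> VB"
  shows "\<exists>l\<in>L z0. S \<subseteq> {(a,None),(z0,None),(z0,Some l)}"
proof (cases "\<exists>l. (z0, Some l) \<in> S")
  case True
  then obtain l where l: "(z0, Some l) \<in> S" by blast
  have lL: "l \<in> L z0" using l assms(1) unfolding simplex_def by auto
  have "S \<subseteq> {(a,None),(z0,None),(z0,Some l)}"
  proof
    fix s assume s: "s \<in> S"
    show "s \<in> {(a,None),(z0,None),(z0,Some l)}"
    proof (cases "s = (a,None)")
      case False
      then have "fst s = z0" using assms(2) s by auto
      moreover have "s \<noteq> (z0, Some l) \<Longrightarrow> E s (z0, Some l)" using assms(1) s l unfolding simplex_def by blast
      ultimately show ?thesis by (cases s; cases "snd s") (auto simp: EB_irr)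
    qed simp
  qed
  then show ?thesis using lL by blast
next
  case False
  obtain l where "l \<in> L z0" using ne assms(3) by blast
  moreover have "S \<subseteq> {(a,None),(z0,None),(z0,Some l)}"
  proof
    fix s assume s: "s \<in> S"
    show "s \<in> {(a,None),(z0,None),(z0,Some l)}"
    proof (cases "s = (a,None)")
      case f: False
      then have "fst s = z0" using assms(2) s by auto
      then show ?thesis using False s by (cases s; cases "snd s") auto
    qed simp
  qed
  ultimately show ?thesis by blast
qed

lemma caseA:
  assumes v: "v \<in> VB" and OmV: "Om \<subseteq> V" and Om: "Om \<subseteq> {z. fst z = v}"
    and p: "(v,Some l1) \<in> Om" and q: "(v,Some l2) \<in> Om" and l12: "l1 \<noteq> l2"
    and S: "S \<subseteq> Om" "S \<noteq> {}" "simplex V E S"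
  shows "\<exists>P Q. good Om S P Q"
proof -
  have lk: "fst (link V E Om) = {x\<in>V. EB (fst x) v} \<union> (if (v,None) \<in> Om then {} else {(v,None)})"
  proof (rule set_eqI)
    fix x
    show "x \<in> fst (link V E Om) \<longleftrightarrow> x \<in> {x\<in>V. EB (fst x) v} \<union> (if (v,None) \<in> Om then {} else {(v,None)})"
    proof
      assume x: "x \<in> fst (link V E Om)"
      then have xV: "x \<in> V" "x \<notin> Om" "E x (v, Some l1)" unfolding lk_eq using p by auto
      show "x \<in> {x\<in>V. EB (fst x) v} \<union> (if (v,None) \<in> Om then {} else {(v,None)})"
      proof (cases "fst x = v")
        case True
        then have "snd x = None" using xV(3) E_fst_eq by fastforce
        then have "x = (v,None)" using True by (cases x) auto
        then show ?thesis using xV by auto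
      next
        case False
        have "EB (fst x) v" using E_fst_ne[OF xV(3)] False by simp
        then show ?thesis using xV by blast
      qed
    next
      assume x: "x \<in> {x\<in>V. EB (fst x) v} \<union> (if (v,None) \<in> Om then {} else {(v,None)})"
      show "x \<in> fst (link V E Om)"
      proof (cases "EB (fst x) v \<and> x \<in> V")
        case True
        have "x \<notin> Om" using True Om EB_irr by auto
        moreover have "\<forall>s\<in>Om. E x s"
        proof
          fix s assume "s \<in> Om"
          then show "E x s" using E_by_EB[of x s] True Om OmV by auto
        qed
        ultimately show ?thesis unfolding lk_eq using True by blast
      next
        case False
        then have xx: "x = (v,None)" "(v,None) \<notin> Om" using x by (auto split: if_splits)
        have "\<forall>s\<in>Om. E x s"
        proof
          fix s assume s: "s \<in> Om"
          then have "fst s = v" "s \<noteq> (v,None)" using Om xx by auto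
          then have "snd s \<noteq> None" by (cases s) auto
          then show "E x s" using E_same[of x s] xx s OmV v \<open>fst s = v\<close> by auto
        qed
        then show ?thesis unfolding lk_eq using xx v by auto
      qed
    qed
  qed
  have SS: "S \<subseteq> insert (v,None) {z. fst z = v}" using S Om by auto
  obtain l where l: "l \<in> L v" "S \<subseteq> {(v,None),(v,None),(v,Some l)}" using extractL[OF S(3) SS v] by blast
  show ?thesis
  proof (cases "(v,None) \<in> Om")
    case True
    have "good Om S {(v,None),(v,Some l)} {}"
      unfolding good_def using LkA1[OF v l(1)] lk True l v unfolding simplex_def by auto
    then show ?thesis by blast
  next
    case False
    then have "(v,None) \<notin> S" using S by auto
    then have "S = {(v,Some l)}" using l S(2) by auto
    then have "good Om S {(v,Some l)} {}"
      unfolding good_def using LkA2[OF v l(1)] lk False l v unfolding simplex_def by auto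
    then show ?thesis by blast
  qed
qed

end

context BL begin

lemma E_fst_eq2: "E x y \<Longrightarrow> fst x = fst y \<Longrightarrow> (snd x = None) \<noteq> (snd y = None)"
  unfolding blowup_E_def using EB_irr by auto

lemma adj_leaf:
  assumes "E (w, Some m) r"
  shows "r = (w,None) \<or> EB (fst r) w"
proof (cases "fst r = w")
  case True
  then have "snd r = None" using E_fst_eq[OF assms] by simp
  then show ?thesis using True by (cases r) auto
next
  case False
  then show ?thesis using E_fst_ne[OF assms] EB_sym by auto
qed

lemma common:
  assumes "fst x \<noteq> fst y" "\<not> EB (fst x) (fst y)" "E x r" "E y r"
  shows "EB (fst r) (fst x) \<and> EB (fst r) (fst y)"
proof -
  have "fst r \<noteq> fst x"
  proof
    assume h: "fst r = fst x"
    then have "EB (fst y) (fst r)" using E_fst_ne[OF assms(4)] assms(1) by auto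
    then show False using assms(2) h EB_sym by auto
  qed
  moreover have "fst r \<noteq> fst y"
  proof
    assume h: "fst r = fst y"
    then have "EB (fst x) (fst r)" using E_fst_ne[OF assms(3)] assms(1) by auto
    then show False using assms(2) h by auto
  qed
  ultimately show ?thesis using E_fst_ne[OF assms(3)] E_fst_ne[OF assms(4)] EB_sym by auto
qed

lemma caseB:
  assumes w: "w \<in> VB" and OmV: "Om \<subseteq> V"
    and x: "(w,Some m1) \<in> fst (link V E Om)" and y: "(w,Some m2) \<in> fst (link V E Om)" and m12: "m1 \<noteq> m2"
    and p: "p \<in> Om" and q: "q \<in> Om" and pq: "fst p \<noteq> fst q" "\<not> EB (fst p) (fst q)"
    and S: "S \<subseteq> Om" "simplex V E S"
  shows "\<exists>P Q. good Om S P Q"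
proof -
  have h1: "\<forall>r\<in>Om. r = (w,None) \<or> EB (fst r) w"
    using x adj_leaf unfolding lk_eq by blast
  have hp: "EB (fst p) w" using h1 p q pq EB_sym by (metis fst_conv)
  have hq: "EB (fst q) w" using h1 p q pq EB_sym by (metis fst_conv)
  have h3: "\<forall>z\<in>fst (link V E Om). fst z = w"
  proof
    fix z assume z: "z \<in> fst (link V E Om)"
    then have "E z p" "E z q" using p q unfolding lk_eq by auto
    then have "EB (fst z) (fst p)" "EB (fst z) (fst q)" using common[OF pq] E_sym by blast+
    then show "fst z = w" using uniq[of "fst z" "fst p" "fst q" w] hp hq pq EB_sym by blast
  qed
  have lk: "fst (link V E Om) = {x\<in>V. fst x = w \<and> snd x \<noteq> None} \<union> (if (w,None) \<in> Om then {} else {(w,None)})"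
  proof (rule set_eqI)
    fix z
    show "z \<in> fst (link V E Om) \<longleftrightarrow> z \<in> {x\<in>V. fst x = w \<and> snd x \<noteq> None} \<union> (if (w,None) \<in> Om then {} else {(w,None)})"
    proof
      assume z: "z \<in> fst (link V E Om)"
      have "fst z = w" using h3 z by blast
      moreover have "z \<in> V" "z \<notin> Om" using z unfolding lk_eq by auto
      ultimately
      show "z \<in> {x\<in>V. fst x = w \<and> snd x \<noteq> None} \<union> (if (w,None) \<in> Om then {} else {(w,None)})"
        by (cases z; cases "snd z") auto
    next
      assume z: "z \<in> {x\<in>V. fst x = w \<and> snd x \<noteq> None} \<union> (if (w,None) \<in> Om then {} else {(w,None)})"
      show "z \<in> fst (link V E Om)"
      proof (cases "z \<in> V \<and> fst z = w \<and> snd z \<noteq> None")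
        case True
        have "z \<notin> Om" using True h1 EB_irr by (cases z) force
        moreover have "\<forall>s\<in>Om. E z s"
        proof
          fix s assume s: "s \<in> Om"
          show "E z s"
          proof (cases "s = (w,None)")
            case True
            then show ?thesis using True E_same[of z s] \<open>z \<in> V \<and> fst z = w \<and> snd z \<noteq> None\<close> s OmV by auto
          next
            case False
            then show ?thesis using h1 s E_by_EB[of z s] True OmV EB_sym by auto
          qed
        qed
        ultimately show ?thesis unfolding lk_eq using True by blast
      next
        case False
        then have zz: "z = (w,None)" "(w,None) \<notin> Om" using z by (auto split: if_splits)
        have "\<forall>s\<in>Om. E z s"
        proof
          fix s assume s: "s \<in> Om"
          then have "EB (fst s) w" using h1 zz by auto
          then show "E z s" using E_by_EB[of z s] zz s OmV w EB_sym by auto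
        qed
        then show ?thesis unfolding lk_eq using zz w by auto
      qed
    qed
  qed
  obtain z0 where z0: "EB w z0" "S \<subseteq> insert (w,None) {z. fst z = z0}"
  proof (cases "\<exists>s\<in>S. s \<noteq> (w,None)")
    case True
    then obtain s where s: "s \<in> S" "s \<noteq> (w,None)" by blast
    have sw: "EB (fst s) w" using h1 s S by auto
    have "S \<subseteq> insert (w,None) {z. fst z = fst s}"
    proof
      fix s' assume s': "s' \<in> S"
      show "s' \<in> insert (w,None) {z. fst z = fst s}"
      proof (rule ccontr)
        assume h: "s' \<notin> insert (w,None) {z. fst z = fst s}"
        then have "EB (fst s') w" using h1 s' S by auto
        moreover have "E s s'" using S(2) s s' h unfolding simplex_def by auto
        then have "EB (fst s) (fst s')" using E_fst_ne[of s s'] h by auto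
        ultimately show False using sw tri EB_sym by blast
      qed
    qed
    then show ?thesis using that sw EB_sym by blast
  next
    case False
    then have "S \<subseteq> insert (w,None) {z. fst z = fst p}" by auto
    then show ?thesis using that hp EB_sym by blast
  qed
  have z0V: "z0 \<in> VB" using EB_V z0 by blast
  obtain l where l: "l \<in> L z0" "S \<subseteq> {(w,None),(z0,None),(z0,Some l)}"
    using extractL[OF S(2) z0(2) z0V] by blast
  let ?P = "{(w,None),(z0,None),(z0,Some l)}"
  let ?Q = "if (w,None) \<in> Om then {} else {(w,None)}"
  have sP: "simplex V E ?P" unfolding simplex_def using z0 z0V w l EB_sym by auto
  have sQ: "simplex V E ?Q" unfolding simplex_def using w by auto
  have "good Om S ?P ?Q"
    unfolding good_def using sP sQ l LkB[OF z0(1) l(1)] lk by auto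
  then show ?thesis by blast
qed

lemma caseC:
  assumes uv: "EB u v" and OmV: "Om \<subseteq> V"
    and p: "(v,Some l1) \<in> Om" and q: "(v,Some l2) \<in> Om" and l12: "l1 \<noteq> l2"
    and cu: "(u,None) \<in> Om" and Om: "Om \<subseteq> insert (u,None) {z. fst z = v}"
    and S: "S \<subseteq> Om" "simplex V E S"
  shows "\<exists>P Q. good Om S P Q"
proof -
  have u: "u \<in> VB" and v: "v \<in> VB" using EB_V uv by auto
  have lk: "fst (link V E Om) = {x\<in>V. fst x = u \<and> snd x \<noteq> None} \<union> (if (v,None) \<in> Om then {} else {(v,None)})"
  proof (rule set_eqI)
    fix z
    show "z \<in> fst (link V E Om) \<longleftrightarrow> z \<in> {x\<in>V. fst x = u \<and> snd x \<noteq> None} \<union> (if (v,None) \<in> Om then {} else {(v,None)})"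
    proof
      assume z: "z \<in> fst (link V E Om)"
      then have zz: "z \<in> V" "z \<notin> Om" "E z (v,Some l1)" "E z (u,None)" using p cu unfolding lk_eq by auto
      have a1: "z = (v,None) \<or> EB (fst z) v" using adj_leaf[OF E_sym[OF zz(3)]] .
      show "z \<in> {x\<in>V. fst x = u \<and> snd x \<noteq> None} \<union> (if (v,None) \<in> Om then {} else {(v,None)})"
      proof (cases "z = (v,None)")
        case True then show ?thesis using zz by auto
      next
        case False
        then have zv: "EB (fst z) v" using a1 by auto
        have "fst z = u"
        proof (rule ccontr)
          assume "fst z \<noteq> u"
          then have "EB (fst z) u" using E_fst_ne[OF zz(4)] by simp
          then show False using zv uv tri EB_sym by blast
        qed
        moreover have "snd z \<noteq> None" using E_fst_eq2[OF zz(4)] \<open>fst z = u\<close> by simp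
        ultimately show ?thesis using zz by auto
      qed
    next
      assume z: "z \<in> {x\<in>V. fst x = u \<and> snd x \<noteq> None} \<union> (if (v,None) \<in> Om then {} else {(v,None)})"
      show "z \<in> fst (link V E Om)"
      proof (cases "z \<in> V \<and> fst z = u \<and> snd z \<noteq> None")
        case True
        have "u \<noteq> v" using uv EB_irr by auto
        have "z \<notin> Om" using True Om \<open>u \<noteq> v\<close> by (cases z) auto
        moreover have "\<forall>s\<in>Om. E z s"
        proof
          fix s assume s: "s \<in> Om"
          show "E z s"
          proof (cases "s = (u,None)")
            case True
            then show ?thesis using True E_same[of z s] \<open>z \<in> V \<and> fst z = u \<and> snd z \<noteq> None\<close> s OmV by auto
          next
            case False
            then have "fst s = v" using Om s by auto
            then show ?thesis using s E_by_EB[of z s] True OmV uv by auto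
          qed
        qed
        ultimately show ?thesis unfolding lk_eq using True by blast
      next
        case False
        then have zz: "z = (v,None)" "(v,None) \<notin> Om" using z by (auto split: if_splits)
        have "\<forall>s\<in>Om. E z s"
        proof
          fix s assume s: "s \<in> Om"
          show "E z s"
          proof (cases "s = (u,None)")
            case True then show ?thesis using zz uv EB_sym by auto
          next
            case False
            then have "fst s = v" "s \<noteq> (v,None)" using Om s zz by auto
            then have "snd s \<noteq> None" by (cases s) auto
            then show ?thesis using E_same[of z s] zz s OmV v \<open>fst s = v\<close> by auto
          qed
        qed
        then show ?thesis unfolding lk_eq using zz v by auto
      qed
    qed
  qed
  have SS: "S \<subseteq> insert (u,None) {z. fst z = v}" using S Om by auto
  obtain l where l: "l \<in> L v" "S \<subseteq> {(u,None),(v,None),(v,Some l)}"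
    using extractL[OF S(2) SS v] by blast
  show ?thesis
  proof (cases "(v,None) \<in> Om")
    case True
    let ?P = "{(u,None),(v,None),(v,Some l)}"
    have sP: "simplex V E ?P" unfolding simplex_def using u v l uv EB_sym by auto
    have "good Om S ?P {}"
      unfolding good_def using sP l LkB[OF uv l(1)] lk True unfolding simplex_def by auto
    then show ?thesis by blast
  next
    case False
    let ?P = "{(u,None),(v,Some l)}"
    have "(v,None) \<notin> S" using False S by auto
    then have SP: "S \<subseteq> ?P" using l by auto
    have sP: "simplex V E ?P" unfolding simplex_def using u v l uv EB_sym by auto
    have "good Om S ?P {}"
      unfolding good_def using sP SP LkC[OF uv l(1)] lk False unfolding simplex_def by auto
    then show ?thesis by blast
  qed
qed

end

context BL begin

lemma nonadj:
  assumes "p \<in> V" "q \<in> V" "p \<noteq> q" "\<not> E p q"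
  shows "(fst p = fst q \<and> snd p \<noteq> None \<and> snd q \<noteq> None) \<or> (fst p \<noteq> fst q \<and> \<not> EB (fst p) (fst q))"
proof (cases "fst p = fst q")
  case True
  have "snd p \<noteq> None \<and> snd q \<noteq> None"
  proof (rule ccontr)
    assume h: "\<not> ?thesis"
    show False
    proof (cases "snd p = None \<and> snd q = None")
      case True
      then show False using \<open>fst p = fst q\<close> assms(3) by (simp add: prod_eq_iff)
    next
      case False
      then show False using E_same[OF assms(1,2) \<open>fst p = fst q\<close>] h assms(4) by auto
    qed
  qed
  then show ?thesis using True by simp
next
  case False
  then show ?thesis using E_by_EB[OF assms(1,2)] assms(4) by auto
qed

lemma nonclique:
  assumes sS: "simplex V E S" and sD: "simplex V E D" and Om: "Om = S \<union> D"
    and p: "p \<in> Om" and q: "q \<in> Om" and pq: "p \<noteq> q" "\<not> E p q"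
    and x: "x \<in> fst (link V E Om)" and y: "y \<in> fst (link V E Om)" and xy: "x \<noteq> y" "\<not> E x y"
    and Sne: "S \<noteq> {}"
  shows "\<exists>P Q. good Om S P Q"
proof -
  have OmV: "Om \<subseteq> V" using sS sD Om unfolding simplex_def by auto
  have xV: "x \<in> V" and yV: "y \<in> V" using x y unfolding lk_eq by auto
  have xO: "\<forall>r\<in>Om. E x r" and yO: "\<forall>r\<in>Om. E y r" using x y unfolding lk_eq by auto
  have adjpq: "\<forall>r\<in>Om. r \<noteq> p \<longrightarrow> r \<noteq> q \<longrightarrow> E r p \<or> E r q"
  proof (intro ballI impI)
    fix r assume r: "r \<in> Om" "r \<noteq> p" "r \<noteq> q"
    have "\<not> (p \<in> S \<and> q \<in> S)" using sS pq unfolding simplex_def by blast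
    moreover have "\<not> (p \<in> D \<and> q \<in> D)" using sD pq unfolding simplex_def by blast
    ultimately show "E r p \<or> E r q" using sS sD r p q Om unfolding simplex_def by blast
  qed
  have cp: "(fst p = fst q \<and> snd p \<noteq> None \<and> snd q \<noteq> None) \<or> (fst p \<noteq> fst q \<and> \<not> EB (fst p) (fst q))"
    using nonadj[OF _ _ pq] p q OmV by auto
  have cx: "(fst x = fst y \<and> snd x \<noteq> None \<and> snd y \<noteq> None) \<or> (fst x \<noteq> fst y \<and> \<not> EB (fst x) (fst y))"
    using nonadj[OF xV yV xy] .
  show ?thesis
  proof (cases "fst p = fst q \<and> snd p \<noteq> None \<and> snd q \<noteq> None")
    case PL: True
    obtain v l1 l2 where pv: "p = (v, Some l1)" and qv: "q = (v, Some l2)"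
      using PL by (cases p; cases q) auto
    have l12: "l1 \<noteq> l2" using pq pv qv by auto
    have v: "v \<in> VB" using OmV p pv by auto
    have pO: "(v,Some l1) \<in> Om" and qO: "(v,Some l2) \<in> Om" using p q pv qv by auto
    show ?thesis
    proof (cases "fst x = fst y \<and> snd x \<noteq> None \<and> snd y \<noteq> None")
      case XL: True
      obtain u m1 where xu: "x = (u, Some m1)" using XL by (cases x) auto
      have uv: "EB u v" using xO pO xu by auto
      show ?thesis
      proof (cases "Om \<subseteq> {z. fst z = v}")
        case True
        then show ?thesis using caseA[OF v OmV True pO qO l12] Om Sne sS by blast
      next
        case False
        have cl: "\<forall>r\<in>Om. fst r \<noteq> v \<longrightarrow> r = (u,None)"
        proof (intro ballI impI)
          fix r assume r: "r \<in> Om" "fst r \<noteq> v"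
          have "r \<noteq> p" "r \<noteq> q" using r pv qv by auto
          then have "E r p \<or> E r q" using adjpq r by blast
          then have rv: "EB (fst r) v" using E_fst_ne r pv qv by fastforce
          have "r = (u,None) \<or> EB (fst r) u" using adj_leaf[of u m1 r] xO xu r by auto
          then show "r = (u,None)" using rv uv tri EB_sym by blast
        qed
        then have Om2: "Om \<subseteq> insert (u,None) {z. fst z = v}" by auto
        have "(u,None) \<in> Om" using False cl by auto
        then show ?thesis using caseC[OF uv OmV pO qO l12 _ Om2] Om sS by blast
      qed
    next
      case XD: False
      then have XD': "fst x \<noteq> fst y" "\<not> EB (fst x) (fst y)" using cx by auto
      have pc: "EB v (fst x)" "EB v (fst y)" using common[OF XD'] xO yO pO by fastforce+
      have "Om \<subseteq> {z. fst z = v}"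
      proof
        fix r assume r: "r \<in> Om"
        have "EB (fst r) (fst x)" "EB (fst r) (fst y)" using common[OF XD'] xO yO r by blast+
        then have "fst r = v" using uniq[of "fst r" "fst x" "fst y" v] pc XD' by blast
        then show "r \<in> {z. fst z = v}" by simp
      qed
      then show ?thesis using caseA[OF v OmV _ pO qO l12] Om Sne sS by blast
    qed
  next
    case PD: False
    then have PD': "fst p \<noteq> fst q" "\<not> EB (fst p) (fst q)" using cp by auto
    show ?thesis
    proof (cases "fst x = fst y \<and> snd x \<noteq> None \<and> snd y \<noteq> None")
      case XL: True
      obtain u m1 m2 where xu: "x = (u, Some m1)" and yu: "y = (u, Some m2)"
        using XL by (cases x; cases y) auto
      have u: "u \<in> VB" using xV xu by auto
      have m12: "m1 \<noteq> m2" using xy xu yu by auto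
      show ?thesis using caseB[OF u OmV _ _ m12 p q PD'] x y xu yu Om sS by blast
    next
      case XD: False
      then have XD': "fst x \<noteq> fst y" "\<not> EB (fst x) (fst y)" using cx by auto
      have "EB (fst p) (fst x)" "EB (fst p) (fst y)" using common[OF XD'] xO yO p by blast+
      moreover have "EB (fst q) (fst x)" "EB (fst q) (fst y)" using common[OF XD'] xO yO q by blast+
      ultimately have "fst p = fst q" using uniq[of "fst p" "fst x" "fst y" "fst q"] XD' by blast
      then show ?thesis using PD' by simp
    qed
  qed
qed

lemma main_good:
  assumes sS: "simplex V E S" and sD: "simplex V E D"
  shows "\<exists>P Q. good (S \<union> D) S P Q"
proof (cases "simplex V E (S \<union> D)")
  case True
  have "good (S \<union> D) S (S \<union> D) {}" unfolding good_def using True unfolding simplex_def by auto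
  then show ?thesis by blast
next
  case False
  then obtain p q where pq: "p \<in> S \<union> D" "q \<in> S \<union> D" "p \<noteq> q" "\<not> E p q"
    using sS sD unfolding simplex_def by blast
  let ?I = "fst (link V E (S \<union> D))"
  show ?thesis
  proof (cases "\<forall>x\<in>?I. \<forall>y\<in>?I. x \<noteq> y \<longrightarrow> E x y")
    case True
    obtain M where M: "maximal_simplex V E M" "S \<subseteq> M" using simplex_ext[OF sS] by blast
    have sI: "simplex V E ?I" using clique_finite[OF True] True unfolding simplex_def lk_eq by auto
    have "good (S \<union> D) S M ?I" unfolding good_def using M sI link_max_empty[OF M(1)]
      unfolding maximal_simplex_def by auto
    then show ?thesis by blast
  next
    case False
    then obtain x y where xy: "x \<in> ?I" "y \<in> ?I" "x \<noteq> y" "\<not> E x y" by blast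
    have "S \<noteq> {}" using \<open>\<not> simplex V E (S \<union> D)\<close> sD by auto
    then show ?thesis using nonclique[OF sS sD refl pq xy] by blast
  qed
qed

end

theorem mainTheorem20:
  fixes VB :: "'v set" and EB :: "'v \<Rightarrow> 'v \<Rightarrow> bool" and L :: "'v \<Rightarrow> 'l set"
    and \<Sigma> \<Delta> :: "('v \<times> 'l option) set"
  assumes "simplicial_graph VB EB"
    and "triangle_free VB EB"
    and "square_free VB EB"
    and "no_isolated_vertex VB EB"
    and "\<forall>v\<in>VB. L v \<noteq> {}"
    and "simplex (blowup_V VB L) (blowup_E VB EB L) \<Sigma>"
    and "\<not> maximal_simplex (blowup_V VB L) (blowup_E VB EB L) \<Sigma>"
    and "simplex (blowup_V VB L) (blowup_E VB EB L) \<Delta>"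
    and "\<not> maximal_simplex (blowup_V VB L) (blowup_E VB EB L) \<Delta>"
  shows "\<exists>\<Pi> \<Psi>. simplex (blowup_V VB L) (blowup_E VB EB L) \<Pi> \<and>
           simplex (blowup_V VB L) (blowup_E VB EB L) \<Psi> \<and> \<Sigma> \<subseteq> \<Pi> \<and>
           fst (link (blowup_V VB L) (blowup_E VB EB L) \<Pi>) \<inter> \<Psi> = {} \<and>
           graph_inter (link (blowup_V VB L) (blowup_E VB EB L) \<Sigma>)
                       (link (blowup_V VB L) (blowup_E VB EB L) \<Delta>)
           = graph_join (link (blowup_V VB L) (blowup_E VB EB L) \<Pi>)
                        (induced (blowup_E VB EB L) \<Psi>)"
proof -
  interpret BL VB EB L using assms(1-5) by unfold_locales
  obtain P Q where g: "good (\<Sigma> \<union> \<Delta>) \<Sigma> P Q" using main_good[OF assms(6) assms(8)] by blast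
  have eq: "graph_inter (link V E \<Sigma>) (link V E \<Delta>) = graph_join (link V E P) (induced E Q)"
    unfolding inter_link
    by (rule join_eq[OF E_sym]) (use g in \<open>auto simp: good_def\<close>)
  show ?thesis using g eq unfolding good_def by blast
qed


end
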